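(* Let $K\subset\mathbb{C}^2$ be a bombon such that the (complex) ellipsoid of minimal volume containing $K$ is the closed unit ball $B$ of $\mathbb{C}^2$. Then $K\cap\mathbb{S}^3$ is a linearly closed subset of the abstract linear space $LS^3$.
   Context: A convex body is a compact convex subset of $\mathbb{C}^n$ with nonempty interior. A (complex) ellipsoid is the image of the closed Euclidean unit ball under an invertible complex affine map. A bombon is a convex body $K\subset\mathbb{C}^n$ such that for every complex affine line $L$, $L\cap K$ is empty, a single point, or a closed round disk in $L$. $\mathbb{S}^3=\partial B$ is the unit sphere of $\mathbb{C}^2$. The abstract linear space $LS^3$ has point set $\mathbb{S}^3$ and abstract lines the sets $L\cap\mathbb{S}^3$ where $L$ is a complex affine line of $\mathbb{C}^2$ meeting $\mathbb{S}^3$ in more than one point (i.e. non-tangential; such $L\cap\mathbb{S}^3$ is a round circle); any two distinct points of $\mathbb{S}^3$ lie on exactly one abstract line. A subset $A\subset\mathbb{S}^3$ is linearly closed if for any two distinct $x,y\in A$ the abstract line through $x$ and $y$ is contained in $A$. *)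

theory Defs
  imports "HOL-Analysis.Analysis"
begin

text \<open>We model \<open>\<complex>\<^sup>2\<close> as \<open>complex \<times> complex\<close>, whose norm is the Euclidean (Hermitian) norm
  \<open>sqrt (|z|^2 + |w|^2)\<close>; volume is Lebesgue measure on the underlying \<open>\<real>\<^sup>4\<close>.\<close>

type_synonym c2 = "complex \<times> complex"

definition cscale :: "complex \<Rightarrow> c2 \<Rightarrow> c2" where
  "cscale t v = (t * fst v, t * snd v)"

definition complex_line :: "c2 set \<Rightarrow> bool" where
  "complex_line L \<longleftrightarrow> (\<exists>p v. v \<noteq> 0 \<and> L = {p + cscale t v | t. True})"

definition line_through :: "c2 \<Rightarrow> c2 \<Rightarrow> c2 set" where
  "line_through x y = {x + cscale t (y - x) | t. True}"

definition convex_body :: "c2 set \<Rightarrow> bool" where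
  "convex_body K \<longleftrightarrow> compact K \<and> convex K \<and> interior K \<noteq> {}"

definition complex_ellipsoid :: "c2 set \<Rightarrow> bool" where
  "complex_ellipsoid E \<longleftrightarrow>
     (\<exists>a b c d e f :: complex. a * d - b * c \<noteq> 0 \<and>
        E = (\<lambda>(z, w). (a * z + b * w + e, c * z + d * w + f)) ` cball 0 1)"

definition bombon :: "c2 set \<Rightarrow> bool" where
  "bombon K \<longleftrightarrow> convex_body K \<and>
     (\<forall>L. complex_line L \<longrightarrow>
        L \<inter> K = {} \<or> (\<exists>p. L \<inter> K = {p}) \<or>
        (\<exists>c\<in>L. \<exists>r>0. L \<inter> K = L \<inter> cball c r))"

definition min_vol_ellipsoid :: "c2 set \<Rightarrow> c2 set \<Rightarrow> bool" where
  "min_vol_ellipsoid K E \<longleftrightarrow> complex_ellipsoid E \<and> K \<subseteq> E \<and>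
     (\<forall>E'. complex_ellipsoid E' \<and> K \<subseteq> E' \<longrightarrow> measure lborel E \<le> measure lborel E')"

definition linearly_closed :: "c2 set \<Rightarrow> bool" where
  "linearly_closed A \<longleftrightarrow> A \<subseteq> sphere 0 1 \<and>
     (\<forall>x\<in>A. \<forall>y\<in>A. x \<noteq> y \<longrightarrow> line_through x y \<inter> sphere 0 1 \<subseteq> A)"

end

theory Submission
  imports Defs
begin


lemma disk:
  fixes s c a b q :: complex and \<rho> R :: real
  assumes sub: "\<And>u. cmod (u - s) \<le> \<rho> \<Longrightarrow> cmod (u - c) \<le> R"
    and a1: "cmod (a - s) \<le> \<rho>" and a2: "cmod (a - c) = R"
    and b1: "cmod (b - s) \<le> \<rho>" and b2: "cmod (b - c) = R"
    and ab: "a \<noteq> b" and q: "cmod (q - c) = R"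
  shows "cmod (q - s) \<le> \<rho>"
proof -
  define d where "d = cmod (s - c)"
  have r0: "\<rho> \<ge> 0" using a1 norm_ge_zero order_trans by blast
  have st1: "d + \<rho> \<le> R"
  proof (cases "s = c")
    case True
    have "cmod ((s + of_real \<rho>) - s) \<le> \<rho>" using r0 by simp
    from sub[OF this] show ?thesis using True r0 by (simp add: d_def)
  next
    case False
    hence dp: "d > 0" by (simp add: d_def)
    define u where "u = s + of_real (\<rho>/d) * (s - c)"
    have "u - s = of_real (\<rho>/d) * (s - c)" by (simp add: u_def)
    hence "cmod (u - s) = \<bar>\<rho>/d\<bar> * d" by (simp only: norm_mult norm_of_real d_def)
    hence "cmod (u - s) = \<rho>" using dp r0 by simp
    hence "cmod (u - c) \<le> R" using sub by simp
    moreover have "u - c = of_real (1 + \<rho>/d) * (s - c)" by (simp add: u_def algebra_simps)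
    hence "cmod (u - c) = \<bar>1 + \<rho>/d\<bar> * d" by (simp only: norm_mult norm_of_real d_def)
    hence "cmod (u - c) = (1 + \<rho>/d) * d" using dp r0 by simp
    moreover have "(1 + \<rho>/d) * d = d + \<rho>" using dp by (simp add: field_simps)
    ultimately show ?thesis by linarith
  qed
  have tri: "cmod (p - c) \<le> cmod (p - s) + d" for p
    using norm_triangle_ineq[of "p - s" "s - c"] by (simp add: d_def)
  have dR: "d = R - \<rho>" using tri[of a] a1 a2 st1 by linarith
  show ?thesis
  proof (cases "d = 0")
    case True
    then show ?thesis using q dR by (simp add: d_def)
  next
    case False
    hence dp: "d > 0" by (simp add: d_def)
    have uniq: "p = s + of_real (\<rho>/d) * (s - c)" if p1: "cmod (p - s) \<le> \<rho>" and p2: "cmod (p - c) = R" for p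
    proof -
      have e: "cmod (p - s) = \<rho>" using tri[of p] p1 p2 dR by linarith
      have "cmod ((p - s) + (s - c)) = cmod (p - s) + cmod (s - c)"
        using e p2 dR by (simp add: d_def)
      hence "\<rho> *\<^sub>R (s - c) = d *\<^sub>R (p - s)" using e norm_triangle_eq d_def by metis
      hence "p - s = (\<rho>/d) *\<^sub>R (s - c)" using dp
        by (metis (no_types, lifting) divide_inverse_commute less_irrefl scaleR_scaleR inverse_eq_divide
            right_inverse scaleR_one mult.commute)
      thus ?thesis by (simp add: scaleR_conv_of_real algebra_simps)
    qed
    have "a = b" using uniq[OF a1 a2] uniq[OF b1 b2] by simp
    with ab show ?thesis by simp
  qed
qed


lemma norm_cscale: "norm (cscale t v) = cmod t * norm v"
proof -
  have "norm (cscale t v) = sqrt ((cmod t)^2 * ((cmod (fst v))^2 + (cmod (snd v))^2))"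
    by (simp add: cscale_def norm_Pair norm_mult power_mult_distrib algebra_simps)
  also have "\<dots> = cmod t * norm v"
    by (simp add: real_sqrt_mult norm_Pair[of "fst v" "snd v", simplified])
  finally show ?thesis .
qed

lemma normP2: "(norm (a::complex, b::complex))^2 = (cmod a)^2 + (cmod b)^2"
  by (simp add: norm_Pair)

lemma ident:
  fixes x v :: c2 and t :: complex
  defines "n \<equiv> (norm v)^2" and "h \<equiv> cnj (fst x) * fst v + cnj (snd x) * snd v"
  shows "n * ((norm (x + cscale t v))^2 - (norm x)^2) = (cmod (of_real n * t + cnj h))^2 - (cmod h)^2"
proof -
  obtain x1 x2 v1 v2 where xv: "x = (x1,x2)" "v = (v1,v2)" by (cases x, cases v) auto
  show ?thesis unfolding n_def h_def xv
    apply (simp only: cscale_def normP2 plus_prod_def prod.sel fst_conv snd_conv)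
    apply (simp only: cmod_power2)
    apply (simp add: power2_eq_square algebra_simps)
    done
qed

theorem lemma3p2:
  fixes K :: "(complex \<times> complex) set"
  assumes "bombon K"
    and "min_vol_ellipsoid K (cball 0 1)"
  shows "linearly_closed (K \<inter> sphere 0 1)"
  unfolding linearly_closed_def
proof (intro conjI ballI impI subsetI)
  fix z assume "z \<in> K \<inter> sphere 0 1" thus "z \<in> sphere 0 1" by simp
next
  fix x y p assume xK: "x \<in> K \<inter> sphere 0 1" and yK: "y \<in> K \<inter> sphere 0 1" and xy: "x \<noteq> y"
    and pL: "p \<in> line_through x y \<inter> sphere 0 1"
  have KB: "K \<subseteq> cball 0 1" using assms(2) by (simp add: min_vol_ellipsoid_def)
  define v where "v = y - x"
  have v0: "v \<noteq> 0" using xy by (simp add: v_def)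
  define L where "L = line_through x y"
  have Ldef: "L = {x + cscale t v | t. True}" by (simp add: L_def line_through_def v_def)
  have cl: "complex_line L" unfolding complex_line_def Ldef using v0 by blast
  have c00: "cscale 0 v = 0" by (simp add: cscale_def zero_prod_def)
  have c1: "cscale 1 v = v" by (simp add: cscale_def)
  have xL: "x \<in> L" unfolding Ldef using c00 by (metis (mono_tags, lifting) add.right_neutral mem_Collect_eq)
  have yL: "y \<in> L" unfolding Ldef using c1 v_def by (metis (mono_tags, lifting) add.commute diff_add_cancel mem_Collect_eq)
  have "\<not> (L \<inter> K = {} \<or> (\<exists>q. L \<inter> K = {q}))" 
  proof
    assume "L \<inter> K = {} \<or> (\<exists>q. L \<inter> K = {q})"
    moreover have "x \<in> L \<inter> K" "y \<in> L \<inter> K" using xL yL xK yK by auto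
    ultimately show False using xy by (metis empty_iff singletonD)
  qed
  then obtain c r where cL: "c \<in> L" and r: "r > 0" and LK: "L \<inter> K = L \<inter> cball c r"
    using assms(1) cl unfolding bombon_def by blast
  obtain s where cs: "c = x + cscale s v" using cL Ldef by blast
  obtain t where pt: "p = x + cscale t v" using pL unfolding L_def[symmetric] Ldef by blast
  define n where "n = (norm v)^2"
  define h where "h = cnj (fst x) * fst v + cnj (snd x) * snd v"
  have np: "n > 0" using v0 by (simp add: n_def)
  have nx: "norm x = 1" using xK by simp
  define Q where "Q u = x + cscale (u / of_real n) v" for u
  have Q0: "Q 0 = x" using c00 by (simp add: Q_def)
  have Qn: "Q (of_real n) = y" using c1 np by (simp add: Q_def v_def)
  have Qt: "Q (of_real n * t) = p" using np by (simp add: Q_def pt)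
  have QL: "Q u \<in> L" for u unfolding Ldef Q_def by blast
  have idQ: "n * ((norm (Q u))^2 - 1) = (cmod (u + cnj h))^2 - (cmod h)^2" for u
  proof -
    have "n * ((norm (Q u))^2 - (norm x)^2) = (cmod (of_real n * (u / of_real n) + cnj h))^2 - (cmod h)^2"
      unfolding Q_def n_def h_def by (rule ident)
    thus ?thesis using np nx by simp
  qed
  have A: "norm (Q u) \<le> 1 \<longleftrightarrow> cmod (u - (- cnj h)) \<le> cmod h" for u
  proof -
    have "norm (Q u) \<le> 1 \<longleftrightarrow> (norm (Q u))^2 \<le> 1" by (simp add: power_le_one_iff)
    also have "\<dots> \<longleftrightarrow> n * ((norm (Q u))^2 - 1) \<le> 0" using np by (simp add: mult_le_0_iff)
    also have "\<dots> \<longleftrightarrow> (cmod (u + cnj h))^2 \<le> (cmod h)^2" using idQ[of u] by simp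
    also have "\<dots> \<longleftrightarrow> cmod (u + cnj h) \<le> cmod h" by (simp add: power2_le_iff_abs_le)
    finally show ?thesis by simp
  qed
  have A2: "norm (Q u) = 1 \<longleftrightarrow> cmod (u - (- cnj h)) = cmod h" for u
  proof -
    have "norm (Q u) = 1 \<longleftrightarrow> (norm (Q u))^2 = 1" by (metis norm_ge_zero power_one real_sqrt_abs real_sqrt_one abs_of_nonneg)
    also have "\<dots> \<longleftrightarrow> n * ((norm (Q u))^2 - 1) = 0" using np by simp
    also have "\<dots> \<longleftrightarrow> (cmod (u + cnj h))^2 = (cmod h)^2" using idQ[of u] by simp
    also have "\<dots> \<longleftrightarrow> cmod (u + cnj h) = cmod h" by (simp add: power2_eq_iff_nonneg)
    finally show ?thesis by simp
  qed
  have nv: "norm v > 0" using v0 by simp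
  have B: "Q u \<in> cball c r \<longleftrightarrow> cmod (u - of_real n * s) \<le> r * norm v" for u
  proof -
    have "Q u - c = cscale (u / of_real n - s) v" by (simp add: Q_def cs cscale_def algebra_simps)
    hence "dist c (Q u) = cmod (u / of_real n - s) * norm v" by (metis dist_commute dist_norm norm_cscale)
    also have "u / of_real n - s = (u - of_real n * s) / of_real n" using np by (simp add: field_simps)
    finally have "dist c (Q u) = cmod (u - of_real n * s) / n * norm v" using np by (simp add: norm_divide)
    also have "\<dots> = cmod (u - of_real n * s) / norm v" using nv by (simp add: n_def power2_eq_square)
    finally show ?thesis using nv by (simp add: pos_divide_le_eq)
  qed
  have inK: "Q u \<in> K \<longleftrightarrow> cmod (u - of_real n * s) \<le> r * norm v" for u
    using LK QL[of u] B[of u] by blast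
  have "cmod (of_real n * t - of_real n * s) \<le> r * norm v"
  proof (rule disk[where c = "- cnj h" and R = "cmod h" and a = 0 and b = "of_real n"])
    fix u assume "cmod (u - of_real n * s) \<le> r * norm v"
    hence "Q u \<in> cball 0 1" using inK KB by blast
    thus "cmod (u - - cnj h) \<le> cmod h" using A by simp
  next
    show "cmod (0 - of_real n * s) \<le> r * norm v" using inK[of 0] Q0 xK by simp
    show "cmod (0 - - cnj h) = cmod h" using A2[of 0] Q0 nx by simp
    show "cmod (of_real n - of_real n * s) \<le> r * norm v" using inK[of "of_real n"] Qn yK by simp
    show "cmod (of_real n - - cnj h) = cmod h" using A2[of "of_real n"] Qn yK by simp
    show "(0::complex) \<noteq> of_real n" using np by simp
    show "cmod (of_real n * t - - cnj h) = cmod h" using A2[of "of_real n * t"] Qt pL by simp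
  qed
  thus "p \<in> K \<inter> sphere 0 1" using inK[of "of_real n * t"] Qt pL by simp
qed

end
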